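(* Let $(M,\omega)$ be a symplectic manifold, $N\ge4$, and $X_1,\dots,X_N\subset M$ compact sets intersecting cyclically. Let $\Delta=[0,1]\times[0,1]$ with points $p_1=(0,1)$, $p_2,\dots,p_{N-2}\in[0,1]\times\{0\}$ and $p_{N-1}=(1,1)$, in counterclockwise cyclic order, and let $\gamma_1,\dots,\gamma_{N-1}$ be the corresponding arcs (so $\gamma_{N-1}=[0,1]\times\{1\}$). Let $\Phi\in\mathcal F'_{\mathbf\Delta,N-1}(X_1,\dots,X_{N-2},X_{N-1}\cup X_N)$ for this datum $\mathbf\Delta$. Then for every $\varepsilon>0$ there exists a smooth $\widetilde\Phi=(\widetilde\Phi_1,\widetilde\Phi_2):M\to\Delta$ such that: (i) $\widetilde\Phi(X_k)\subseteq\gamma_k$ for all $1\le k\le N-2$; (ii) there is $\delta>0$ with $\widetilde\Phi(X_{N-1})\subseteq\gamma_{N-1}\setminus B_\delta(p_1)$ and $\widetilde\Phi(X_N)\subseteq\gamma_{N-1}\setminus B_\delta(p_{N-1})$; (iii) $\|\{\widetilde\Phi_1,\widetilde\Phi_2\}\|\le\|\{\Phi_1,\Phi_2\}\|+\varepsilon$.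
   Context: $\{\cdot,\cdot\}$ is the Poisson bracket of $(M,\omega)$ and $\|\cdot\|$ the supremum norm over $M$; $B_\delta(p)$ is the open Euclidean disc of radius $\delta$ centered at $p$. For a datum consisting of a compact convex $\Delta\subset\mathbb R^2$ and points $p_1,\dots,p_n\in\partial\Delta$ in counterclockwise cyclic order, $\gamma_i$ is the closed arc of $\partial\Delta$ from $p_i$ counterclockwise to $p_{i+1}$ (indices mod $n$). A smooth $\Phi=(\Phi_1,\Phi_2):M\to\Delta$ satisfies (CS) if there is $(a,b)\in\Delta$ with $\Phi_1-a,\Phi_2-b$ compactly supported. $\mathcal F'_{\mathbf\Delta,n}(Y_1,\dots,Y_n)$ is the set of smooth $\Phi:M\to\Delta$ satisfying (CS) such that for every $i$ there is an open $U_i\supset Y_i$ with $\Phi(U_i)\subseteq\gamma_i$. Sets $X_1,\dots,X_N$ intersect cyclically if $X_i\cap X_j=\emptyset$ whenever $i\notin\{j-1,j,j+1\}$ mod $N$. *)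

theory Defs
  imports "HOL-Analysis.Analysis" "HOL-Library.Extended_Nonnegative_Real"
begin

definition pderiv_coord :: "'d::finite \<Rightarrow> (real^'d \<Rightarrow> real) \<Rightarrow> real^'d \<Rightarrow> real" where
  "pderiv_coord i f x = frechet_derivative f (at x) (axis i 1)"

fun Ck_on :: "nat \<Rightarrow> (real^'d::finite) set \<Rightarrow> (real^'d \<Rightarrow> real) \<Rightarrow> bool" where
  "Ck_on 0 S f = continuous_on S f"
| "Ck_on (Suc k) S f = ((\<forall>x\<in>S. f differentiable (at x)) \<and>
       (\<forall>i. Ck_on k S (pderiv_coord i f)))"

definition smooth_fun_on :: "(real^'d::finite) set \<Rightarrow> (real^'d \<Rightarrow> real) \<Rightarrow> bool" where
  "smooth_fun_on S f = (\<forall>k. Ck_on k S f)"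

definition smooth_map_on :: "(real^'d::finite) set \<Rightarrow> (real^'d \<Rightarrow> real^'e::finite) \<Rightarrow> bool" where
  "smooth_map_on S F = (\<forall>j. smooth_fun_on S (\<lambda>x. F x $ j))"

definition grad_coord :: "(real^'d::finite \<Rightarrow> real) \<Rightarrow> real^'d \<Rightarrow> real^'d" where
  "grad_coord f x = (\<chi> i. pderiv_coord i f x)"

type_synonym ('m, 'd) chart = "'m set \<times> ('m \<Rightarrow> real^'d)"

definition is_chart :: "'m topology \<Rightarrow> ('m, 'd::finite) chart \<Rightarrow> bool" where
  "is_chart X c = (case c of (U, \<phi>) \<Rightarrow> openin X U \<and> open (\<phi> ` U) \<and>
      homeomorphic_map (subtopology X U) (subtopology euclidean (\<phi> ` U)) \<phi>)"

definition transition :: "('m, 'd::finite) chart \<Rightarrow> ('m, 'd) chart \<Rightarrow> real^'d \<Rightarrow> real^'d" where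
  "transition c c' = snd c' \<circ> inv_into (fst c) (snd c)"

definition smooth_atlas :: "'m topology \<Rightarrow> ('m, 'd::finite) chart set \<Rightarrow> bool" where
  "smooth_atlas X A = ((\<forall>c\<in>A. is_chart X c) \<and> \<Union>(fst ` A) = topspace X \<and>
      (\<forall>c\<in>A. \<forall>c'\<in>A. smooth_map_on (snd c ` (fst c \<inter> fst c')) (transition c c')))"

definition smooth_manifold :: "'m topology \<Rightarrow> ('m, 'd::finite) chart set \<Rightarrow> bool" where
  "smooth_manifold X A = (Hausdorff_space X \<and> second_countable X \<and> smooth_atlas X A)"

definition smooth_on_mfd :: "('m, 'd::finite) chart set \<Rightarrow> ('m \<Rightarrow> real) \<Rightarrow> bool" where
  "smooth_on_mfd A f = (\<forall>c\<in>A. smooth_fun_on (snd c ` fst c) (f \<circ> inv_into (fst c) (snd c)))"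

text \<open>A 2-form is given by its coefficient matrices W c x in every chart c
  (omega(v,w) = v^T W w in coordinates), transforming correctly on overlaps.\<close>

definition symplectic_manifold ::
  "'m topology \<Rightarrow> ('m, 'd::finite) chart set \<Rightarrow> (('m, 'd) chart \<Rightarrow> real^'d \<Rightarrow> real^'d^'d) \<Rightarrow> bool" where
  "symplectic_manifold X A W = (smooth_manifold X A \<and>
     (\<forall>c\<in>A. \<forall>i j. smooth_fun_on (snd c ` fst c) (\<lambda>x. W c x $ i $ j)) \<and>
     (\<forall>c\<in>A. \<forall>x\<in>snd c ` fst c. transpose (W c x) = - W c x) \<and>
     (\<forall>c\<in>A. \<forall>x\<in>snd c ` fst c. invertible (W c x)) \<and>
     (\<forall>c\<in>A. \<forall>x\<in>snd c ` fst c. \<forall>i j k.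
         pderiv_coord i (\<lambda>y. W c y $ j $ k) x + pderiv_coord j (\<lambda>y. W c y $ k $ i) x
       + pderiv_coord k (\<lambda>y. W c y $ i $ j) x = 0) \<and>
     (\<forall>c\<in>A. \<forall>c'\<in>A. \<forall>x\<in>snd c ` (fst c \<inter> fst c').
         W c x = transpose (matrix (frechet_derivative (transition c c') (at x)))
                 ** W c' (transition c c' x)
                 ** matrix (frechet_derivative (transition c c') (at x))))"

text \<open>Poisson bracket, computed in (any) chart containing the point:
  {F,G} = dF (W^-1 grad G). (The overall sign convention is irrelevant below, only
  its absolute value enters.)\<close>
definition poisson_bracket ::
  "('m, 'd::finite) chart set \<Rightarrow> (('m, 'd) chart \<Rightarrow> real^'d \<Rightarrow> real^'d^'d) \<Rightarrow>
   ('m \<Rightarrow> real) \<Rightarrow> ('m \<Rightarrow> real) \<Rightarrow> 'm \<Rightarrow> real" where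
  "poisson_bracket A W F G p =
     (let c = (SOME c. c \<in> A \<and> p \<in> fst c); y = snd c p;
          \<psi> = inv_into (fst c) (snd c)
      in grad_coord (F \<circ> \<psi>) y \<bullet> (matrix_inv (W c y) *v grad_coord (G \<circ> \<psi>) y))"

definition sup_norm :: "'m topology \<Rightarrow> ('m \<Rightarrow> real) \<Rightarrow> ennreal" where
  "sup_norm X f = (SUP x\<in>topspace X. ennreal \<bar>f x\<bar>)"

definition unit_square :: "(real \<times> real) set" where
  "unit_square = {(x, y). 0 \<le> x \<and> x \<le> 1 \<and> 0 \<le> y \<and> y \<le> 1}"

text \<open>Arcs gamma_1..gamma_(N-1) of the boundary of the square for the points
  p_1 = (0,1), p_k = (s k, 0) for 2 <= k <= N-2, p_(N-1) = (1,1).\<close>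
definition sq_arc :: "nat \<Rightarrow> (nat \<Rightarrow> real) \<Rightarrow> nat \<Rightarrow> (real \<times> real) set" where
  "sq_arc N s k =
    (if k = 1 then {(0, y) | y. 0 \<le> y \<and> y \<le> 1} \<union> {(x, 0) | x. 0 \<le> x \<and> x \<le> s 2}
     else if 2 \<le> k \<and> k \<le> N - 3 then {(x, 0) | x. s k \<le> x \<and> x \<le> s (k + 1)}
     else if k = N - 2 then {(x, 0) | x. s (N - 2) \<le> x \<and> x \<le> 1} \<union> {(1, y) | y. 0 \<le> y \<and> y \<le> 1}
     else {(x, 1) | x. 0 \<le> x \<and> x \<le> 1})"

definition intersect_cyclically :: "nat \<Rightarrow> (nat \<Rightarrow> 'a set) \<Rightarrow> bool" where
  "intersect_cyclically N Xs = (\<forall>i\<in>{1..N}. \<forall>j\<in>{1..N}.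
      \<not> (i mod N = (j + N - 1) mod N \<or> i mod N = j mod N \<or> i mod N = (j + 1) mod N)
      \<longrightarrow> Xs i \<inter> Xs j = {})"

definition CS_cond :: "'m topology \<Rightarrow> (real \<times> real) set \<Rightarrow> ('m \<Rightarrow> real \<times> real) \<Rightarrow> bool" where
  "CS_cond X D \<Phi> = (\<exists>(a, b)\<in>D.
      compactin X (X closure_of {x \<in> topspace X. fst (\<Phi> x) - a \<noteq> 0}) \<and>
      compactin X (X closure_of {x \<in> topspace X. snd (\<Phi> x) - b \<noteq> 0}))"

definition F'_class ::
  "'m topology \<Rightarrow> ('m, 'd::finite) chart set \<Rightarrow> (real \<times> real) set \<Rightarrow> (nat \<Rightarrow> (real \<times> real) set)
   \<Rightarrow> nat \<Rightarrow> (nat \<Rightarrow> 'm set) \<Rightarrow> ('m \<Rightarrow> real \<times> real) set" where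
  "F'_class X A D gam n Y = {\<Phi>.
      smooth_on_mfd A (\<lambda>x. fst (\<Phi> x)) \<and> smooth_on_mfd A (\<lambda>x. snd (\<Phi> x)) \<and>
      \<Phi> ` topspace X \<subseteq> D \<and> CS_cond X D \<Phi> \<and>
      (\<forall>i\<in>{1..n}. \<exists>U. openin X U \<and> Y i \<subseteq> U \<and> \<Phi> ` U \<subseteq> gam i)}"

end

theory Submission
  imports Defs "HOL-Computational_Algebra.Polynomial"
begin

lemma fd_cong:
  assumes "open S" "x \<in> S" "\<forall>y\<in>S. f y = g y"
  shows "frechet_derivative f (at x) = frechet_derivative g (at x)"
proof -
  have "\<And>D. (f has_derivative D) (at x) \<longleftrightarrow> (g has_derivative D) (at x)"
    using assms has_derivative_transform_within_open[of _ _ x UNIV S] by metis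
  thus ?thesis unfolding frechet_derivative_def by simp
qed

lemma diff_cong:
  assumes "open S" "x \<in> S" "\<forall>y\<in>S. f y = g y"
  shows "f differentiable (at x) \<longleftrightarrow> g differentiable (at x)"
  using assms has_derivative_transform_within_open[of _ _ x UNIV S]
  unfolding differentiable_def by metis

lemma pd_cong:
  assumes "open S" "x \<in> S" "\<forall>y\<in>S. f y = g y"
  shows "pderiv_coord i f x = pderiv_coord i g x"
  using fd_cong[OF assms] unfolding pderiv_coord_def by simp

lemma Ck_mono: "Ck_on (Suc k) S f \<Longrightarrow> Ck_on k S f"
proof (induction k arbitrary: f)
  case 0
  then show ?case
    by (auto intro!: continuous_at_imp_continuous_on differentiable_imp_continuous_within)
next
  case (Suc k)
  then show ?case by auto
qed


lemma Ck_cong: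
  assumes "open S" "\<forall>x\<in>S. f x = g x" "Ck_on k S f"
  shows "Ck_on k S g"
  using assms
proof (induction k arbitrary: f g)
  case 0
  then show ?case using continuous_on_cong by (metis Ck_on.simps(1))
next
  case (Suc k)
  have d: "\<forall>x\<in>S. g differentiable (at x)"
    using Suc.prems diff_cong[of S _ f g] by auto
  have "Ck_on k S (pderiv_coord i g)" for i
  proof -
    have "Ck_on k S (pderiv_coord i f)" using Suc.prems by auto
    moreover have "\<forall>x\<in>S. pderiv_coord i f x = pderiv_coord i g x"
      using pd_cong[of S _ f g] Suc.prems by auto
    ultimately show ?thesis using Suc.IH Suc.prems(1) by blast
  qed
  with d show ?case by simp
qed

lemma Ck_local:
  assumes "open S" "\<forall>x\<in>S. \<exists>T. open T \<and> x \<in> T \<and> T \<subseteq> S \<and> Ck_on k T f"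
  shows "Ck_on k S f"
  using assms(2)
proof (induction k arbitrary: f)
  case 0
  have "continuous (at x) f" if "x \<in> S" for x
  proof -
    obtain T where "open T" "x \<in> T" "continuous_on T f" using 0 \<open>x\<in>S\<close> by auto
    thus ?thesis using continuous_on_eq_continuous_at by blast
  qed
  then show ?case by (simp add: continuous_at_imp_continuous_on)
next
  case (Suc k)
  have "\<forall>x\<in>S. f differentiable (at x)" using Suc.prems by fastforce
  moreover have "Ck_on k S (pderiv_coord i f)" for i
    apply (rule Suc.IH) using Suc.prems by (metis Ck_on.simps(2))
  ultimately show ?case by simp
qed

lemma Ck_const: "Ck_on k (S::(real^'d) set) (\<lambda>x. c)"
proof (induction k arbitrary: c)
  case 0 then show ?case by simp
next
  case (Suc k)
  have "pderiv_coord i (\<lambda>x::real^'d. c) = (\<lambda>x. 0)" for i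
    by (rule ext) (simp add: pderiv_coord_def)
  then show ?case using Suc by simp
qed

lemma pd_add:
  assumes "f differentiable (at x)" "g differentiable (at x)"
  shows "pderiv_coord i (\<lambda>x. f x + g x) x = pderiv_coord i f x + pderiv_coord i g x"
proof -
  have "((\<lambda>x. f x + g x) has_derivative (\<lambda>h. frechet_derivative f (at x) h + frechet_derivative g (at x) h)) (at x)"
    using assms by (intro has_derivative_add) (auto simp: frechet_derivative_works)
  from frechet_derivative_at[OF this] show ?thesis unfolding pderiv_coord_def by metis
qed

lemma pd_mult:
  assumes "f differentiable (at x)" "g differentiable (at x)"
  shows "pderiv_coord i (\<lambda>x. f x * g x) x = f x * pderiv_coord i g x + pderiv_coord i f x * g x"
proof -
  have "((\<lambda>x. f x * g x) has_derivative (\<lambda>h. f x * frechet_derivative g (at x) h + frechet_derivative f (at x) h * g x)) (at x)"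
    using assms by (intro has_derivative_mult) (auto simp: frechet_derivative_works)
  from frechet_derivative_at[OF this] show ?thesis unfolding pderiv_coord_def by metis
qed

lemma Ck_add:
  assumes "open S" "Ck_on k S f" "Ck_on k S g"
  shows "Ck_on k S (\<lambda>x. f x + g x)"
  using assms(2,3)
proof (induction k arbitrary: f g)
  case 0 then show ?case by (auto intro: continuous_intros)
next
  case (Suc k)
  have "Ck_on k S (pderiv_coord i (\<lambda>x. f x + g x))" for i
  proof -
    have A: "Ck_on k S (\<lambda>x. pderiv_coord i f x + pderiv_coord i g x)"
      using Suc by auto
    have B: "\<forall>x\<in>S. pderiv_coord i f x + pderiv_coord i g x = pderiv_coord i (\<lambda>x. f x + g x) x"
      using Suc.prems pd_add by fastforce
    show ?thesis by (rule Ck_cong[OF assms(1) B A])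
  qed
  then show ?case using Suc.prems by auto
qed

lemma Ck_mult:
  assumes "open S" "Ck_on k S f" "Ck_on k S g"
  shows "Ck_on k S (\<lambda>x. f x * g x)"
  using assms(2,3)
proof (induction k arbitrary: f g)
  case 0 then show ?case by (auto intro: continuous_intros)
next
  case (Suc k)
  have "Ck_on k S (pderiv_coord i (\<lambda>x. f x * g x))" for i
  proof -
    have f1: "Ck_on k S f" using Ck_mono Suc.prems(1) by blast
    have g1: "Ck_on k S g" using Ck_mono Suc.prems(2) by blast
    have "Ck_on k S (\<lambda>x. f x * pderiv_coord i g x)"
      using Suc.IH[OF f1] Suc.prems(2) by simp
    moreover have "Ck_on k S (\<lambda>x. pderiv_coord i f x * g x)"
      using Suc.IH[OF _ g1] Suc.prems(1) by simp
    ultimately have A: "Ck_on k S (\<lambda>x. f x * pderiv_coord i g x + pderiv_coord i f x * g x)"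
      by (rule Ck_add[OF assms(1)])
    have B: "\<forall>x\<in>S. f x * pderiv_coord i g x + pderiv_coord i f x * g x = pderiv_coord i (\<lambda>x. f x * g x) x"
      using Suc.prems pd_mult by fastforce
    show ?thesis by (rule Ck_cong[OF assms(1) B A])
  qed
  moreover have "\<forall>x\<in>S. (\<lambda>x. f x * g x) differentiable (at x)"
    using Suc.prems by (auto intro: differentiable_mult)
  ultimately show ?case by simp
qed

lemma Ck_coord: "Ck_on k S (\<lambda>x::real^'d. x $ j)"
proof (cases k)
  case 0 then show ?thesis by (simp add: continuous_on_component)
next
  case (Suc m)
  have "pderiv_coord i (\<lambda>x::real^'d. x $ j) = (\<lambda>x. if i = j then 1 else 0)" for i
  proof
    fix x :: "real^'d"
    have "((\<lambda>x::real^'d. x $ j) has_derivative (\<lambda>h. h $ j)) (at x)"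
      by (simp add: bounded_linear_vec_nth bounded_linear_imp_has_derivative)
    from frechet_derivative_at[OF this] show "pderiv_coord i (\<lambda>x. x $ j) x = (if i = j then 1 else 0)"
      unfolding pderiv_coord_def by (auto simp: axis_def)
  qed
  moreover have "(\<lambda>x::real^'d. x $ j) differentiable (at x)" for x
    by (simp add: bounded_linear_vec_nth bounded_linear_imp_differentiable)
  ultimately show ?thesis using Suc Ck_const by (auto simp del: Ck_on.simps(1))
qed

definition hflat :: "real poly \<Rightarrow> real \<Rightarrow> real" where
  "hflat P t = (if t > 0 then poly P (inverse t) * exp (- inverse t) else 0)"

definition dstep :: "real poly \<Rightarrow> real poly" where
  "dstep P = [:0,0,1:] * (P - pderiv P)"

lemma poly_exp_lim: "((\<lambda>u::real. u * poly (P::real poly) u * exp (-u)) \<longlongrightarrow> 0) at_top"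
proof -
  have e: "\<And>u. u * poly P u * exp (-u) = (\<Sum>i\<le>degree P. coeff P i * (u ^ (Suc i) / exp u))"
    by (simp add: poly_altdef sum_distrib_left sum_distrib_right exp_minus field_simps)
  have "((\<lambda>u. \<Sum>i\<le>degree P. coeff P i * (u ^ (Suc i) / exp u)) \<longlongrightarrow> (\<Sum>i\<le>degree P. coeff P i * 0)) at_top"
    by (intro tendsto_sum tendsto_mult tendsto_const tendsto_power_div_exp_0)
  then show ?thesis unfolding e by simp
qed

lemma hflat_deriv0: "(hflat P has_real_derivative 0) (at 0)"
proof -
  have "((\<lambda>y. (hflat P y - hflat P 0) / (y - 0)) \<longlongrightarrow> 0) (at (0::real))"
  proof (rule filterlim_split_at)
    have ev: "\<forall>\<^sub>F y in at_left 0. 0 = (hflat P y - hflat P 0) / (y - (0::real))"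
      unfolding eventually_at_left_field
      by (rule exI[of _ "-1"]) (simp add: hflat_def)
    show "((\<lambda>y. (hflat P y - hflat P 0) / (y - 0)) \<longlongrightarrow> 0) (at_left (0::real))"
      using tendsto_cong[OF ev] tendsto_const[of "0::real" "at_left 0"] by blast
    have l: "((\<lambda>y. inverse y * poly P (inverse y) * exp (- inverse y)) \<longlongrightarrow> 0) (at_right (0::real))"
      using poly_exp_lim[of P] unfolding filterlim_at_top_to_right .
    have ev2: "\<forall>\<^sub>F y in at_right 0. inverse y * poly P (inverse y) * exp (- inverse y) = (hflat P y - hflat P 0) / (y - (0::real))"
      unfolding eventually_at_right_field
      by (rule exI[of _ 1]) (simp add: hflat_def divide_inverse mult_ac)
    show "((\<lambda>y. (hflat P y - hflat P 0) / (y - 0)) \<longlongrightarrow> 0) (at_right (0::real))"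
      using tendsto_cong[OF ev2] l by simp
  qed
  then show ?thesis using has_field_derivative_iff by blast
qed

lemma hflat_deriv: "(hflat P has_real_derivative hflat (dstep P) t) (at t)"
proof (cases "t > 0")
  case True
  have i: "((\<lambda>t. inverse t) has_real_derivative - (inverse t ^ Suc (Suc 0))) (at t)"
    using True by (intro DERIV_inverse) simp
  have p: "((\<lambda>t. poly P (inverse t)) has_real_derivative poly (pderiv P) (inverse t) * - (inverse t ^ Suc (Suc 0))) (at t)"
    by (rule DERIV_chain2[OF poly_DERIV i])
  have m: "((\<lambda>t. - inverse t) has_real_derivative - (- (inverse t ^ Suc (Suc 0)))) (at t)"
    by (rule DERIV_minus[OF i])
  have e: "((\<lambda>t. exp (- inverse t)) has_real_derivative exp (- inverse t) * - (- (inverse t ^ Suc (Suc 0)))) (at t)"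
    by (rule DERIV_chain2[OF DERIV_exp m])
  have d: "((\<lambda>t. poly P (inverse t) * exp (- inverse t)) has_real_derivative
      poly P (inverse t) * (exp (- inverse t) * - (- (inverse t ^ Suc (Suc 0)))) +
      poly (pderiv P) (inverse t) * - (inverse t ^ Suc (Suc 0)) * exp (- inverse t)) (at t)"
    by (rule DERIV_mult'[OF p e])
  have "poly P (inverse t) * (exp (- inverse t) * - (- (inverse t ^ Suc (Suc 0)))) +
      poly (pderiv P) (inverse t) * - (inverse t ^ Suc (Suc 0)) * exp (- inverse t)
        = hflat (dstep P) t"
    using True by (simp add: hflat_def dstep_def algebra_simps)
  with d have "((\<lambda>t. poly P (inverse t) * exp (- inverse t)) has_real_derivative hflat (dstep P) t) (at t)" by simp
  then show ?thesis
    by (rule has_field_derivative_transform_within_open[where S="{0<..}"]) (use True in \<open>auto simp: hflat_def\<close>)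
next
  case False
  show ?thesis
  proof (cases "t = 0")
    case True
    then show ?thesis using hflat_deriv0 by (simp add: hflat_def)
  next
    case False2: False
    with False have "t < 0" by simp
    have "((\<lambda>t. 0) has_real_derivative 0) (at t)" by simp
    hence "(hflat P has_real_derivative 0) (at t)"
      by (rule has_field_derivative_transform_within_open[where S="{..<0}"]) (use \<open>t<0\<close> in \<open>auto simp: hflat_def\<close>)
    then show ?thesis using \<open>t<0\<close> by (simp add: hflat_def)
  qed
qed

lemma hflat_bounds: "0 \<le> hflat 1 t" "hflat 1 t \<le> 1"
  by (auto simp: hflat_def)

lemma hflat_pos: "t > 0 \<Longrightarrow> hflat 1 t > 0" by (simp add: hflat_def)
lemma hflat_zero: "t \<le> 0 \<Longrightarrow> hflat 1 t = 0" by (simp add: hflat_def)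

lemma Ck_hflat:
  assumes "open S" "\<forall>k. Ck_on k S q"
  shows "Ck_on k S (\<lambda>x. hflat P (q x))"
proof (induction k arbitrary: P)
  case 0
  have "Ck_on 0 S q" using assms(2) by blast
  hence "continuous_on S q" by simp
  moreover have "continuous_on UNIV (hflat P)"
    using hflat_deriv DERIV_isCont continuous_at_imp_continuous_on by blast
  ultimately show ?case by (simp add: continuous_on_compose2[of UNIV "hflat P" S q])
next
  case (Suc k)
  have "Ck_on (Suc 0) S q" using assms(2) by blast
  hence qd: "\<forall>x\<in>S. q differentiable (at x)" by simp
  have hd: "((\<lambda>x. hflat P (q x)) has_derivative (\<lambda>h. hflat (dstep P) (q x) * frechet_derivative q (at x) h)) (at x)"
    if "x \<in> S" for x
  proof -
    have "(hflat P has_derivative (*) (hflat (dstep P) (q x))) (at (q x))"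
      using hflat_deriv[of P "q x"] by (simp add: has_field_derivative_def)
    moreover have "(q has_derivative frechet_derivative q (at x)) (at x)"
      using qd that frechet_derivative_works by blast
    ultimately show ?thesis using has_derivative_compose by blast
  qed
  have "Ck_on k S (pderiv_coord i (\<lambda>x. hflat P (q x)))" for i
  proof -
    have "Ck_on (Suc k) S q" using assms(2) by blast
    hence "Ck_on k S (pderiv_coord i q)" by simp
    hence A: "Ck_on k S (\<lambda>x. hflat (dstep P) (q x) * pderiv_coord i q x)"
      by (rule Ck_mult[OF assms(1) Suc.IH])
    have B: "\<forall>x\<in>S. hflat (dstep P) (q x) * pderiv_coord i q x = pderiv_coord i (\<lambda>x. hflat P (q x)) x"
    proof
      fix x assume "x \<in> S"
      have e: "(\<lambda>h. hflat (dstep P) (q x) * frechet_derivative q (at x) h) = frechet_derivative (\<lambda>x. hflat P (q x)) (at x)"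
        by (rule frechet_derivative_at[OF hd[OF \<open>x\<in>S\<close>]])
      show "hflat (dstep P) (q x) * pderiv_coord i q x = pderiv_coord i (\<lambda>x. hflat P (q x)) x"
        unfolding pderiv_coord_def e[symmetric] by simp
    qed
    show ?thesis by (rule Ck_cong[OF assms(1) B A])
  qed
  moreover have "\<forall>x\<in>S. (\<lambda>x. hflat P (q x)) differentiable (at x)"
    using hd differentiable_def by blast
  ultimately show ?case by simp
qed

lemma Ck_sum:
  assumes "open S" "finite I" "\<forall>i\<in>I. Ck_on k S (f i)"
  shows "Ck_on k S (\<lambda>x. \<Sum>i\<in>I. f i x)"
  using assms(2,3)
proof (induction I rule: finite_induct)
  case empty then show ?case using Ck_const by simp
next
  case (insert a F)
  then show ?case using Ck_add[OF assms(1), of k "f a" "\<lambda>x. \<Sum>i\<in>F. f i x"] by simp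
qed

lemma Ck_prod:
  assumes "open S" "finite I" "\<forall>i\<in>I. Ck_on k S (f i)"
  shows "Ck_on k S (\<lambda>x. \<Prod>i\<in>I. f i x)"
  using assms(2,3)
proof (induction I rule: finite_induct)
  case empty then show ?case using Ck_const by simp
next
  case (insert a F)
  then show ?case using Ck_mult[OF assms(1), of k "f a" "\<lambda>x. \<Prod>i\<in>F. f i x"] by simp
qed

lemma Ck_diff:
  assumes "open S" "Ck_on k S f" "Ck_on k S g"
  shows "Ck_on k S (\<lambda>x. f x - g x)"
proof -
  have "Ck_on k S (\<lambda>x. f x + (-1) * g x)"
    by (rule Ck_add[OF assms(1,2) Ck_mult[OF assms(1) Ck_const assms(3)]])
  thus ?thesis by simp
qed

section \<open>Closure properties on the manifold\<close>

lemma chart_facts: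
  assumes "smooth_atlas X A" "c \<in> A"
  shows "openin X (fst c)" "open (snd c ` fst c)"
    "homeomorphic_map (subtopology X (fst c)) (top_of_set (snd c ` fst c)) (snd c)"
    "fst c \<subseteq> topspace X" "inj_on (snd c) (fst c)"
proof -
  have ch: "is_chart X c" using assms unfolding smooth_atlas_def by blast
  show o: "openin X (fst c)" and "open (snd c ` fst c)"
    and h: "homeomorphic_map (subtopology X (fst c)) (top_of_set (snd c ` fst c)) (snd c)"
    using ch unfolding is_chart_def by (auto split: prod.splits)
  show s: "fst c \<subseteq> topspace X" using o openin_subset by blast
  show "inj_on (snd c) (fst c)"
    using homeomorphic_imp_injective_map[OF h] s by (simp add: Int_absorb1)
qed

lemma chart_inv:
  assumes "smooth_atlas X A" "c \<in> A" "q \<in> fst c"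
  shows "inv_into (fst c) (snd c) (snd c q) = q"
  using chart_facts(5)[OF assms(1,2)] assms(3) by (simp add: inv_into_f_f)

lemma chart_open_image:
  assumes "smooth_atlas X A" "c \<in> A" "openin X Ob"
  shows "open (snd c ` (fst c \<inter> Ob))"
proof -
  note f = chart_facts[OF assms(1,2)]
  have "openin (subtopology X (fst c)) (fst c \<inter> Ob)"
    using openin_subtopology_Int2[OF assms(3)] .
  hence "openin (top_of_set (snd c ` fst c)) (snd c ` (fst c \<inter> Ob))"
    using homeomorphic_map_openness[OF f(3)] f(4) by (simp add: Int_absorb1)
  thus ?thesis using openin_open_trans f(2) by blast
qed

lemma chart_pre_open:
  assumes "smooth_atlas X A" "c \<in> A" "open B"
  shows "openin X {q \<in> fst c. snd c q \<in> B}"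
proof -
  note f = chart_facts[OF assms(1,2)]
  let ?C = "{q \<in> fst c. snd c q \<in> B}"
  have "snd c ` ?C = snd c ` fst c \<inter> B" by auto
  moreover have "openin (top_of_set (snd c ` fst c)) (snd c ` fst c \<inter> B)"
    using openin_open_Int[OF assms(3)] .
  ultimately have "openin (subtopology X (fst c)) ?C"
    using homeomorphic_map_openness[OF f(3), of ?C] f(4) by (auto simp: Int_absorb1)
  thus ?thesis using openin_trans_full f(1) by blast
qed

lemma chart_pre_compact:
  assumes "smooth_atlas X A" "c \<in> A" "compact K" "K \<subseteq> snd c ` fst c"
  shows "compactin X {q \<in> fst c. snd c q \<in> K}"
proof -
  note f = chart_facts[OF assms(1,2)]
  let ?C = "{q \<in> fst c. snd c q \<in> K}"
  have e: "snd c ` ?C = K" using assms(4) by auto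
  have "compactin (top_of_set (snd c ` fst c)) K"
    using assms(3,4) by (simp add: compactin_subtopology)
  hence "compactin (subtopology X (fst c)) ?C"
    using homeomorphic_map_compactness[OF f(3), of ?C] f(4) e by (auto simp: Int_absorb1)
  thus ?thesis by (simp add: compactin_subtopology)
qed

lemma mfd_const: "smooth_on_mfd A (\<lambda>x. a)"
  unfolding smooth_on_mfd_def smooth_fun_on_def by (simp add: o_def Ck_const)

lemma mfd_add:
  assumes "smooth_atlas X A" "smooth_on_mfd A f" "smooth_on_mfd A g"
  shows "smooth_on_mfd A (\<lambda>x. f x + g x)"
  using assms chart_facts(2)[OF assms(1)] Ck_add
  unfolding smooth_on_mfd_def smooth_fun_on_def o_def by blast

lemma mfd_mult:
  assumes "smooth_atlas X A" "smooth_on_mfd A f" "smooth_on_mfd A g"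
  shows "smooth_on_mfd A (\<lambda>x. f x * g x)"
  using assms chart_facts(2)[OF assms(1)] Ck_mult
  unfolding smooth_on_mfd_def smooth_fun_on_def o_def by blast

lemma mfd_diff:
  assumes "smooth_atlas X A" "smooth_on_mfd A f" "smooth_on_mfd A g"
  shows "smooth_on_mfd A (\<lambda>x. f x - g x)"
  using assms chart_facts(2)[OF assms(1)] Ck_diff
  unfolding smooth_on_mfd_def smooth_fun_on_def o_def by blast

lemma mfd_prod:
  assumes "smooth_atlas X A" "finite I" "\<forall>i\<in>I. smooth_on_mfd A (f i)"
  shows "smooth_on_mfd A (\<lambda>x. \<Prod>i\<in>I. f i x)"
  using assms(2,3)
proof (induction I rule: finite_induct)
  case empty then show ?case using mfd_const by simp
next
  case (insert a F)
  then show ?case using mfd_mult[OF assms(1), of "f a" "\<lambda>x. \<Prod>i\<in>F. f i x"] by simp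
qed


section \<open>Bump functions\<close>

definition bumpf :: "real^'d \<Rightarrow> real \<Rightarrow> real^'d \<Rightarrow> real" where
  "bumpf y0 r y = hflat 1 (r * r - (\<Sum>i\<in>UNIV. (y$i - y0$i) * (y$i - y0$i)))"

lemma sum_sq_dist: "(\<Sum>i\<in>UNIV. ((y::real^'d)$i - y0$i) * (y$i - y0$i)) = dist y y0 * dist y y0"
proof -
  have "dist y y0 * dist y y0 = (dist y y0)^2" by (simp add: power2_eq_square)
  also have "\<dots> = (\<Sum>i\<in>UNIV. (dist (y$i) (y0$i))^2)"
    unfolding dist_vec_def L2_set_def by (simp add: sum_nonneg)
  also have "\<dots> = (\<Sum>i\<in>UNIV. (y$i - y0$i) * (y$i - y0$i))"
    by (simp add: dist_real_def power2_eq_square)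
  finally show ?thesis by simp
qed

lemma bumpf_alt: "bumpf y0 r y = hflat 1 (r * r - dist y y0 * dist y y0)"
  unfolding bumpf_def sum_sq_dist ..

lemma hflat1: "t > 0 \<Longrightarrow> hflat 1 t = exp (- inverse t)"
  by (simp add: hflat_def)

lemma hflat1_mono: "0 < a \<Longrightarrow> a \<le> b \<Longrightarrow> hflat 1 a \<le> hflat 1 b"
  by (simp add: hflat1 le_imp_inverse_le)

lemma bumpf_bounds: "0 \<le> bumpf y0 r y" "bumpf y0 r y \<le> 1"
  by (auto simp: bumpf_def hflat_def)

lemma bumpf_zero: "r > 0 \<Longrightarrow> y \<notin> cball y0 r \<Longrightarrow> bumpf y0 r y = 0"
proof -
  assume "r > 0" "y \<notin> cball y0 r"
  hence "dist y0 y > r" by simp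
  hence "r * r \<le> dist y y0 * dist y y0" using \<open>r>0\<close> by (simp add: dist_commute mult_mono)
  thus ?thesis by (simp add: bumpf_alt hflat_def)
qed

lemma bumpf_lower: "r > 0 \<Longrightarrow> y \<in> ball y0 (r/2) \<Longrightarrow> hflat 1 (3/4 * r * r) \<le> bumpf y0 r y"
proof -
  assume r: "r > 0" "y \<in> ball y0 (r/2)"
  hence d: "dist y y0 < r/2" "0 \<le> dist y y0" by (auto simp: dist_commute)
  hence "dist y y0 * dist y y0 \<le> (r/2) * (r/2)"
    using mult_mono[of "dist y y0" "r/2" "dist y y0" "r/2"] by auto
  hence "3/4 * r * r \<le> r * r - dist y y0 * dist y y0" by (simp add: field_simps)
  moreover have "0 < 3/4 * r * r" using r by simp
  ultimately show ?thesis unfolding bumpf_alt by (rule hflat1_mono[rotated])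
qed

lemma Ck_bumpf:
  assumes "open S" "\<forall>j k. Ck_on k S (\<lambda>z. T z $ j)"
  shows "Ck_on k S (\<lambda>z. bumpf y0 r (T z))"
proof -
  have "Ck_on k S (\<lambda>z. r * r - (\<Sum>i\<in>UNIV. (T z$i - y0$i) * (T z$i - y0$i)))" for k
  proof -
    have "Ck_on k S (\<lambda>z. T z$i - y0$i)" for i
      by (rule Ck_diff[OF assms(1)]) (use assms(2) Ck_const in auto)
    hence "\<forall>i\<in>UNIV. Ck_on k S (\<lambda>z. (T z$i - y0$i) * (T z$i - y0$i))"
      using Ck_mult[OF assms(1)] by blast
    hence "Ck_on k S (\<lambda>z. \<Sum>i\<in>UNIV. (T z$i - y0$i) * (T z$i - y0$i))"
      using Ck_sum[OF assms(1), of UNIV k "\<lambda>i z. (T z$i - y0$i) * (T z$i - y0$i)"] by simp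
    thus ?thesis by (rule Ck_diff[OF assms(1) Ck_const])
  qed
  then show ?thesis unfolding bumpf_def by (rule Ck_hflat[OF assms(1), rule_format])
qed

definition beta :: "('m, 'd::finite) chart \<Rightarrow> real^'d \<Rightarrow> real \<Rightarrow> 'm \<Rightarrow> real" where
  "beta c y0 r q = (if q \<in> fst c then bumpf y0 r (snd c q) else 0)"

lemma beta_bounds: "0 \<le> beta c y0 r q" "beta c y0 r q \<le> 1"
  by (auto simp: beta_def bumpf_bounds)

lemma beta_smooth:
  assumes atl: "smooth_atlas X A" and H: "Hausdorff_space X" and c: "c \<in> A" and r: "r > 0"
    and cb: "cball y0 r \<subseteq> snd c ` fst c"
  shows "smooth_on_mfd A (beta c y0 r)"
  unfolding smooth_on_mfd_def smooth_fun_on_def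
proof (intro ballI allI)
  fix c' k assume c': "c' \<in> A"
  let ?S = "snd c' ` fst c'" and ?\<psi> = "inv_into (fst c') (snd c')"
  let ?C = "{q \<in> fst c. snd c q \<in> cball y0 r}"
  have Cc: "closedin X ?C"
    using compactin_imp_closedin[OF H chart_pre_compact[OF atl c _ cb]] by simp
  have Sopen: "open ?S" using chart_facts(2)[OF atl c'] .
  note f' = chart_facts[OF atl c']
  show "Ck_on k ?S (beta c y0 r \<circ> ?\<psi>)"
  proof (rule Ck_local[OF Sopen], intro ballI)
    fix y assume "y \<in> ?S"
    then obtain q where q: "q \<in> fst c'" "y = snd c' q" by auto
    have \<psi>q: "?\<psi> y = q" using chart_inv[OF atl c' q(1)] q(2) by simp
    show "\<exists>T. open T \<and> y \<in> T \<and> T \<subseteq> ?S \<and> Ck_on k T (beta c y0 r \<circ> ?\<psi>)"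
    proof (cases "q \<in> fst c")
      case True
      let ?T = "snd c' ` (fst c' \<inter> fst c)"
      have To: "open ?T" using chart_open_image[OF atl c' chart_facts(1)[OF atl c]] .
      have "smooth_map_on ?T (transition c' c)"
        using atl c c' unfolding smooth_atlas_def by blast
      hence "\<forall>j k. Ck_on k ?T (\<lambda>z. transition c' c z $ j)"
        unfolding smooth_map_on_def smooth_fun_on_def by blast
      hence A: "Ck_on k ?T (\<lambda>z. bumpf y0 r (transition c' c z))"
        by (rule Ck_bumpf[OF To])
      have B: "\<forall>z\<in>?T. bumpf y0 r (transition c' c z) = (beta c y0 r \<circ> ?\<psi>) z"
      proof
        fix z assume "z \<in> ?T"
        then obtain w where w: "w \<in> fst c'" "w \<in> fst c" "z = snd c' w" by auto
        have "?\<psi> z = w" using chart_inv[OF atl c' w(1)] w(3) by simp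
        thus "bumpf y0 r (transition c' c z) = (beta c y0 r \<circ> ?\<psi>) z"
          using w by (simp add: transition_def beta_def)
      qed
      show ?thesis
        by (rule exI[of _ ?T]) (use To True q Ck_cong[OF To B A] in \<open>auto simp: o_def\<close>)
    next
      case False
      let ?O = "topspace X - ?C"
      have Oo: "openin X ?O" using Cc by blast
      let ?T = "snd c' ` (fst c' \<inter> ?O)"
      have To: "open ?T" using chart_open_image[OF atl c' Oo] .
      have yT: "y \<in> ?T" using q False f'(4) by auto
      have B: "\<forall>z\<in>?T. 0 = (beta c y0 r \<circ> ?\<psi>) z"
      proof
        fix z assume "z \<in> ?T"
        then obtain w where w: "w \<in> fst c'" "w \<in> ?O" "z = snd c' w" by auto
        have "?\<psi> z = w" using chart_inv[OF atl c' w(1)] w(3) by simp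
        thus "0 = (beta c y0 r \<circ> ?\<psi>) z"
          using w bumpf_zero[OF r] by (auto simp: beta_def)
      qed
      show ?thesis
        by (rule exI[of _ ?T]) (use To yT Ck_cong[OF To B Ck_const] in \<open>auto simp: o_def\<close>)
    qed
  qed
qed


lemma exists_bump:
  fixes A :: "('m, 'd::finite) chart set"
  assumes atl: "smooth_atlas X A" and H: "Hausdorff_space X"
    and K: "compactin X K" and V: "openin X V" and KV: "K \<subseteq> V"
  shows "\<exists>ch c0 C. smooth_on_mfd A ch \<and> (\<forall>q. 0 \<le> ch q \<and> ch q \<le> 1) \<and> c0 > 0 \<and>
           (\<forall>q\<in>K. c0 \<le> ch q) \<and> closedin X C \<and> C \<subseteq> V \<and> (\<forall>q. q \<notin> C \<longrightarrow> ch q = 0)"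
proof -
  have cov: "topspace X = \<Union>(fst ` A)" using atl unfolding smooth_atlas_def by simp
  have "\<forall>p\<in>K. \<exists>t. fst t \<in> A \<and> p \<in> fst (fst t) \<and> snd (snd t) > 0 \<and>
      fst (snd t) = snd (fst t) p \<and> cball (fst (snd t)) (snd (snd t)) \<subseteq> snd (fst t) ` (fst (fst t) \<inter> V)"
  proof
    fix p assume "p \<in> K"
    hence "p \<in> topspace X" using K compactin_subset_topspace by blast
    then obtain c where c: "c \<in> A" "p \<in> fst c" using cov by auto
    have "open (snd c ` (fst c \<inter> V))" using chart_open_image[OF atl c(1) V] .
    moreover have "snd c p \<in> snd c ` (fst c \<inter> V)" using c \<open>p\<in>K\<close> KV by auto
    ultimately obtain r where "r > 0" "cball (snd c p) r \<subseteq> snd c ` (fst c \<inter> V)"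
      using open_contains_cball by blast
    thus "\<exists>t. fst t \<in> A \<and> p \<in> fst (fst t) \<and> snd (snd t) > 0 \<and>
      fst (snd t) = snd (fst t) p \<and> cball (fst (snd t)) (snd (snd t)) \<subseteq> snd (fst t) ` (fst (fst t) \<inter> V)"
      using c by (intro exI[of _ "(c, snd c p, r)"]) auto
  qed
  then obtain t where t: "\<And>p. p \<in> K \<Longrightarrow> fst (t p) \<in> A \<and> p \<in> fst (fst (t p)) \<and> snd (snd (t p)) > 0 \<and>
      fst (snd (t p)) = snd (fst (t p)) p \<and> cball (fst (snd (t p))) (snd (snd (t p))) \<subseteq> snd (fst (t p)) ` (fst (fst (t p)) \<inter> V)"
    by metis
  define cc where "cc p = fst (t p)" for p
  define yy where "yy p = fst (snd (t p))" for p
  define rr where "rr p = snd (snd (t p))" for p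
  have tt: "\<And>p. p \<in> K \<Longrightarrow> cc p \<in> A \<and> p \<in> fst (cc p) \<and> rr p > 0 \<and> yy p = snd (cc p) p \<and>
       cball (yy p) (rr p) \<subseteq> snd (cc p) ` (fst (cc p) \<inter> V)"
    using t unfolding cc_def yy_def rr_def by blast
  define Ob where "Ob p = {q \<in> fst (cc p). snd (cc p) q \<in> ball (yy p) (rr p / 2)}" for p
  have Oopen: "openin X (Ob p)" if "p \<in> K" for p
    unfolding Ob_def using chart_pre_open[OF atl _ open_ball] tt[OF that] by blast
  have pO: "p \<in> Ob p" if "p \<in> K" for p using tt[OF that] by (simp add: Ob_def)
  have "K \<subseteq> \<Union>(Ob ` K)" using pO by blast
  then obtain F where F: "finite F" "F \<subseteq> Ob ` K" "K \<subseteq> \<Union>F"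
    using K Oopen unfolding compactin_def by (metis (no_types, lifting) imageE)
  then obtain P where P: "P \<subseteq> K" "finite P" "F = Ob ` P"
    by (meson finite_subset_image)
  define bt where "bt p = beta (cc p) (yy p) (rr p)" for p
  define ch where "ch q = 1 - (\<Prod>p\<in>P. 1 - bt p q)" for q
  define m where "m p = hflat 1 (3/4 * rr p * rr p)" for p
  define c0 where "c0 = Min (insert 1 (m ` P))"
  define Cp where "Cp p = {q \<in> fst (cc p). snd (cc p) q \<in> cball (yy p) (rr p)}" for p
  define C where "C = \<Union>(Cp ` P)"
  have cbsub: "cball (yy p) (rr p) \<subseteq> snd (cc p) ` fst (cc p)" if "p \<in> K" for p
    using tt[OF that] by blast
  have btsm: "smooth_on_mfd A (bt p)" if "p \<in> K" for p
    unfolding bt_def using beta_smooth[OF atl H _ _ cbsub[OF that]] tt[OF that] by blast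
  have sm: "smooth_on_mfd A ch"
  proof -
    have "\<forall>p\<in>P. smooth_on_mfd A (\<lambda>q. 1 - bt p q)"
      using mfd_diff[OF atl mfd_const btsm] P(1) by blast
    hence "smooth_on_mfd A (\<lambda>q. \<Prod>p\<in>P. 1 - bt p q)"
      by (rule mfd_prod[OF atl P(2)])
    thus ?thesis unfolding ch_def by (rule mfd_diff[OF atl mfd_const])
  qed
  have fb: "0 \<le> 1 - bt p q \<and> 1 - bt p q \<le> 1" for p q
    using beta_bounds[of "cc p" "yy p" "rr p" q] by (simp add: bt_def)
  have bnd: "0 \<le> ch q \<and> ch q \<le> 1" for q
  proof -
    have "0 \<le> (\<Prod>p\<in>P. 1 - bt p q)" using fb by (simp add: prod_nonneg)
    moreover have "(\<Prod>p\<in>P. 1 - bt p q) \<le> 1" using fb by (simp add: prod_le_1)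
    ultimately show ?thesis by (simp add: ch_def)
  qed
  have mpos: "m p > 0" if "p \<in> K" for p
    using tt[OF that] by (simp add: m_def hflat_def)
  have c0pos: "c0 > 0"
    unfolding c0_def using P mpos by (subst Min_gr_iff) auto
  have c0le: "c0 \<le> m p" if "p \<in> P" for p
    unfolding c0_def using P that by (intro Min_le) auto
  have onK: "c0 \<le> ch q" if qK: "q \<in> K" for q
  proof -
    obtain p where p: "p \<in> P" "q \<in> Ob p" using F P qK by auto
    have pK: "p \<in> K" using p P by auto
    have "m p \<le> bt p q"
      using p(2) bumpf_lower[of "rr p" "snd (cc p) q" "yy p"] tt[OF pK]
      by (auto simp: Ob_def bt_def beta_def m_def)
    have "(\<Prod>p\<in>P. 1 - bt p q) = (1 - bt p q) * (\<Prod>p\<in>P - {p}. 1 - bt p q)"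
      using P(2) p(1) by (simp add: prod.remove)
    also have "\<dots> \<le> (1 - bt p q) * 1"
      using fb by (intro mult_left_mono prod_le_1) auto
    finally have "(\<Prod>p\<in>P. 1 - bt p q) \<le> 1 - bt p q" by simp
    thus ?thesis using \<open>m p \<le> bt p q\<close> c0le[OF p(1)] by (simp add: ch_def)
  qed
  have Ccl: "closedin X C"
  proof -
    have "compactin X (Cp p)" if "p \<in> P" for p
      unfolding Cp_def using chart_pre_compact[OF atl _ compact_cball cbsub] tt P that by blast
    hence "compactin X C" unfolding C_def using P(2) by (intro compactin_Union) auto
    thus ?thesis using compactin_imp_closedin[OF H] by blast
  qed
  have CV: "C \<subseteq> V"
  proof
    fix q assume "q \<in> C"
    then obtain p where p: "p \<in> P" "q \<in> Cp p" unfolding C_def by auto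
    have pK: "p \<in> K" using p P by auto
    have "snd (cc p) q \<in> snd (cc p) ` (fst (cc p) \<inter> V)" using p tt[OF pK] by (auto simp: Cp_def)
    then obtain w where "w \<in> fst (cc p)" "w \<in> V" "snd (cc p) q = snd (cc p) w" by auto
    moreover have "q \<in> fst (cc p)" using p by (simp add: Cp_def)
    ultimately show "q \<in> V" using chart_facts(5)[OF atl] tt[OF pK] by (metis inj_onD)
  qed
  have outC: "ch q = 0" if "q \<notin> C" for q
  proof -
    have "bt p q = 0" if "p \<in> P" for p
    proof -
      have pK: "p \<in> K" using that P by auto
      have "q \<notin> Cp p" using \<open>q \<notin> C\<close> that by (auto simp: C_def)
      thus ?thesis using bumpf_zero[of "rr p"] tt[OF pK] by (auto simp: bt_def beta_def Cp_def)
    qed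
    thus ?thesis by (simp add: ch_def)
  qed
  show ?thesis
    using sm bnd c0pos onK Ccl CV outC by blast
qed

theorem mainTheorem9:
  fixes X :: "'m topology" and A :: "('m, 'd::finite) chart set"
    and W :: "('m, 'd) chart \<Rightarrow> real^'d \<Rightarrow> real^'d^'d"
    and N :: nat and Xs :: "nat \<Rightarrow> 'm set" and s :: "nat \<Rightarrow> real"
    and \<Phi> :: "'m \<Rightarrow> real \<times> real"
  assumes symp: "symplectic_manifold X A W"
    and N4: "N \<ge> 4"
    and cpt: "\<forall>i\<in>{1..N}. compactin X (Xs i)"
    and cyc: "intersect_cyclically N Xs"
    and s_first: "0 \<le> s 2"
    and s_incr: "\<forall>k\<in>{2..<N-2}. s k < s (k + 1)"
    and s_last: "s (N - 2) \<le> 1"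
    and Phi: "\<Phi> \<in> F'_class X A unit_square (sq_arc N s) (N - 1)
                  (\<lambda>i. if i = N - 1 then Xs (N - 1) \<union> Xs N else Xs i)"
  shows "\<forall>\<epsilon>>0. \<exists>\<Phi>'. smooth_on_mfd A (\<lambda>x. fst (\<Phi>' x)) \<and> smooth_on_mfd A (\<lambda>x. snd (\<Phi>' x)) \<and>
            \<Phi>' ` topspace X \<subseteq> unit_square \<and>
            (\<forall>k\<in>{1..N-2}. \<Phi>' ` Xs k \<subseteq> sq_arc N s k) \<and>
            (\<exists>\<delta>>0. \<Phi>' ` Xs (N - 1) \<subseteq> sq_arc N s (N - 1) - ball (0, 1) \<delta> \<and>
                    \<Phi>' ` Xs N \<subseteq> sq_arc N s (N - 1) - ball (1, 1) \<delta>) \<and>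
            sup_norm X (poisson_bracket A W (\<lambda>x. fst (\<Phi>' x)) (\<lambda>x. snd (\<Phi>' x)))
              \<le> sup_norm X (poisson_bracket A W (\<lambda>x. fst (\<Phi> x)) (\<lambda>x. snd (\<Phi> x))) + ennreal \<epsilon>"
proof (intro allI impI)
  fix \<epsilon> :: real assume "\<epsilon> > 0"
  have man: "smooth_manifold X A" using symp unfolding symplectic_manifold_def by blast
  hence H: "Hausdorff_space X" and atl: "smooth_atlas X A" unfolding smooth_manifold_def by auto
  have cov: "topspace X = \<Union>(fst ` A)" using atl unfolding smooth_atlas_def by simp
  have topa: "sq_arc N s (N - 1) = {(x, 1) | x. 0 \<le> x \<and> x \<le> 1}"
  proof -
    have h: "(N - 1 = 1) = False" "(2 \<le> N - 1 \<and> N - 1 \<le> N - 3) = False" "(N - 1 = N - 2) = False"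
      using N4 by auto
    show ?thesis by (subst sq_arc_def) (simp only: h if_False)
  qed
  have topa': "sq_arc N s (N - Suc 0) = {(x, 1) | x. 0 \<le> x \<and> x \<le> 1}" using topa by simp
  have arcN2: "sq_arc N s (N - 2) = {(x, 0) | x. s (N - 2) \<le> x \<and> x \<le> 1} \<union> {(1, y) | y. 0 \<le> y \<and> y \<le> 1}"
  proof -
    have h: "(N - 2 = 1) = False" "(2 \<le> N - 2 \<and> N - 2 \<le> N - 3) = False" "(N - 2 = N - 2) = True"
      using N4 by auto
    show ?thesis by (subst sq_arc_def) (simp only: h if_False if_True)
  qed
  have Pm: "smooth_on_mfd A (\<lambda>x. fst (\<Phi> x))" "smooth_on_mfd A (\<lambda>x. snd (\<Phi> x))"
    and Psq: "\<Phi> ` topspace X \<subseteq> unit_square"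
    and Parc: "\<forall>i\<in>{1..N-1}. \<exists>U. openin X U \<and> (if i = N - 1 then Xs (N - 1) \<union> Xs N else Xs i) \<subseteq> U \<and> \<Phi> ` U \<subseteq> sq_arc N s i"
    using Phi unfolding F'_class_def by auto
  have "N - 1 \<in> {1..N-1}" using N4 by auto
  hence "\<exists>U. openin X U \<and> Xs (N - 1) \<union> Xs N \<subseteq> U \<and> \<Phi> ` U \<subseteq> sq_arc N s (N - 1)"
    using bspec[OF Parc] by (metis (full_types))
  then obtain U where U: "openin X U" "Xs (N - 1) \<union> Xs N \<subseteq> U" "\<Phi> ` U \<subseteq> sq_arc N s (N - 1)"
    by blast
  have PXk: "\<Phi> ` Xs k \<subseteq> sq_arc N s k" if "k \<in> {1..N-2}" for k
  proof -
    have "k \<in> {1..N-1}" "k \<noteq> N - 1" using that N4 by auto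
    then obtain Uk where "Xs k \<subseteq> Uk" "\<Phi> ` Uk \<subseteq> sq_arc N s k"
      using Parc by fastforce
    thus ?thesis by auto
  qed
  have cpt1: "compactin X (Xs 1)" and cptN2: "compactin X (Xs (N - 2))"
    and cptN1: "compactin X (Xs (N - 1))" and cptN: "compactin X (Xs N)"
    using cpt N4 by auto
  have d1: "Xs (N - 1) \<inter> Xs 1 = {}"
  proof (rule cyc[unfolded intersect_cyclically_def, rule_format])
    show "N - 1 \<in> {1..N}" "1 \<in> {1..N}" using N4 by auto
    have f1: "(1 + N - 1) mod N = 0" by simp
    have f2: "(N - 1) mod N = N - 1" by (rule mod_less) (use N4 in linarith)
    have f3: "1 mod N = 1" by (rule mod_less) (use N4 in linarith)
    have f4: "(1 + 1) mod N = 1 + 1" by (rule mod_less) (use N4 in linarith)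
    show "\<not> ((N - 1) mod N = (1 + N - 1) mod N \<or> (N - 1) mod N = 1 mod N \<or> (N - 1) mod N = (1 + 1) mod N)"
      unfolding f1 f2 f3 f4 using N4 by linarith
  qed
  have d2: "Xs N \<inter> Xs (N - 2) = {}"
  proof (rule cyc[unfolded intersect_cyclically_def, rule_format])
    show "N \<in> {1..N}" "N - 2 \<in> {1..N}" using N4 by auto
    have e: "N - 2 + N - 1 = (N - 3) + N" using N4 by linarith
    have f1: "(N - 2 + N - 1) mod N = N - 3"
      unfolding e mod_add_self2 by (rule mod_less) (use N4 in linarith)
    have f2: "N mod N = 0" by simp
    have f3: "(N - 2) mod N = N - 2" by (rule mod_less) (use N4 in linarith)
    have f4: "(N - 2 + 1) mod N = N - 2 + 1" by (rule mod_less) (use N4 in linarith)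
    show "\<not> (N mod N = (N - 2 + N - 1) mod N \<or> N mod N = (N - 2) mod N \<or> N mod N = (N - 2 + 1) mod N)"
      unfolding f1 f2 f3 f4 using N4 by linarith
  qed
  have Va: "openin X (U - Xs 1)" using U(1) compactin_imp_closedin[OF H cpt1] by blast
  have Vb: "openin X (U - Xs (N - 2))" using U(1) compactin_imp_closedin[OF H cptN2] by blast
  obtain cha ca Ca where a: "smooth_on_mfd A cha" "\<forall>q. 0 \<le> cha q \<and> cha q \<le> 1" "ca > 0"
      "\<forall>q\<in>Xs (N - 1). ca \<le> cha q" "closedin X Ca" "Ca \<subseteq> U - Xs 1" "\<forall>q. q \<notin> Ca \<longrightarrow> cha q = 0"
    using exists_bump[OF atl H cptN1 Va] U(2) d1 by blast
  obtain chb cb Cb where b: "smooth_on_mfd A chb" "\<forall>q. 0 \<le> chb q \<and> chb q \<le> 1" "cb > 0"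
      "\<forall>q\<in>Xs N. cb \<le> chb q" "closedin X Cb" "Cb \<subseteq> U - Xs (N - 2)" "\<forall>q. q \<notin> Cb \<longrightarrow> chb q = 0"
    using exists_bump[OF atl H cptN Vb] U(2) d2 by blast
  define y1 where "y1 q = 1 - (1 - fst (\<Phi> q)) * (1 - cha q * (1/3))" for q
  define y2 where "y2 q = y1 q * (1 - chb q * (1/3))" for q
  define \<Psi> where "\<Psi> q = (y2 q, snd (\<Phi> q))" for q
  have sm1: "smooth_on_mfd A (\<lambda>x. fst (\<Psi> x))"
  proof -
    have "smooth_on_mfd A y1" unfolding y1_def
      by (intro mfd_diff[OF atl] mfd_mult[OF atl] mfd_const Pm a(1))
    hence "smooth_on_mfd A y2" unfolding y2_def
      by (intro mfd_diff[OF atl] mfd_mult[OF atl] mfd_const b(1))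
    thus ?thesis by (simp add: \<Psi>_def)
  qed
  have sm2: "smooth_on_mfd A (\<lambda>x. snd (\<Psi> x))" using Pm(2) by (simp add: \<Psi>_def)
  have outU: "\<Psi> q = \<Phi> q" if "q \<notin> U" for q
  proof -
    have "cha q = 0" "chb q = 0" using a(6,7) b(6,7) that by auto
    thus ?thesis by (simp add: \<Psi>_def y1_def y2_def)
  qed
  have inU: "snd (\<Phi> q) = 1 \<and> 0 \<le> fst (\<Phi> q) \<and> fst (\<Phi> q) \<le> 1" if "q \<in> U" for q
    using U(3) that topa by auto
  have y1b: "0 \<le> y1 q \<and> y1 q \<le> 1" if "0 \<le> fst (\<Phi> q)" "fst (\<Phi> q) \<le> 1" for q
  proof -
    have "0 \<le> (1 - fst (\<Phi> q)) * (1 - cha q * (1/3))" "(1 - fst (\<Phi> q)) * (1 - cha q * (1/3)) \<le> 1"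
      using that a(2)[rule_format, of q] by (auto intro!: mult_nonneg_nonneg mult_le_one)
    thus ?thesis by (simp add: y1_def)
  qed
  have y2b: "0 \<le> y2 q \<and> y2 q \<le> 1" if "0 \<le> fst (\<Phi> q)" "fst (\<Phi> q) \<le> 1" for q
    using y1b[OF that] b(2)[rule_format, of q] unfolding y2_def
    by (auto intro!: mult_nonneg_nonneg mult_le_one)
  have sq: "\<Psi> ` topspace X \<subseteq> unit_square"
  proof
    fix z assume "z \<in> \<Psi> ` topspace X"
    then obtain q where q: "q \<in> topspace X" "z = \<Psi> q" by auto
    have "\<Phi> q \<in> unit_square" using Psq q(1) by auto
    hence "0 \<le> fst (\<Phi> q)" "fst (\<Phi> q) \<le> 1" "0 \<le> snd (\<Phi> q)" "snd (\<Phi> q) \<le> 1"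
      by (auto simp: unit_square_def)
    thus "z \<in> unit_square" using y2b q by (auto simp: unit_square_def \<Psi>_def)
  qed
  have arcs: "\<forall>k\<in>{1..N-2}. \<Psi> ` Xs k \<subseteq> sq_arc N s k"
  proof (intro ballI subsetI)
    fix k z assume k: "k \<in> {1..N-2}" and "z \<in> \<Psi> ` Xs k"
    then obtain q where q: "q \<in> Xs k" "z = \<Psi> q" by auto
    have Pq: "\<Phi> q \<in> sq_arc N s k" using PXk[OF k] q(1) by auto
    show "z \<in> sq_arc N s k"
    proof (cases "q \<in> U")
      case False
      then show ?thesis using outU Pq q by simp
    next
      case True
      note iu = inU[OF True]
      consider "k = 1" | "2 \<le> k \<and> k \<le> N - 3" | "k = N - 2" using k N4 by fastforce
      then show ?thesis
      proof cases
        case 1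
        hence "fst (\<Phi> q) = 0" using Pq iu by (auto simp: sq_arc_def)
        moreover have "cha q = 0" using a(6,7) q(1) 1 by auto
        ultimately have "\<Psi> q = (0, 1)" using iu by (simp add: \<Psi>_def y2_def y1_def)
        then show ?thesis using q 1 by (auto simp: sq_arc_def)
      next
        case 2
        then show ?thesis using Pq iu N4 by (auto simp: sq_arc_def)
      next
        case 3
        have "\<Phi> q \<in> sq_arc N s (N - 2)" using Pq 3 by simp
        hence "fst (\<Phi> q) = 1" using iu unfolding arcN2 by auto
        moreover have "chb q = 0" using b(6,7) q(1) 3 by auto
        ultimately have "\<Psi> q = (1, 1)" using iu by (simp add: \<Psi>_def y2_def y1_def)
        hence "z \<in> sq_arc N s (N - 2)" using q unfolding arcN2 by auto
        then show ?thesis using 3 by simp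
      qed
    qed
  qed
  define \<delta> where "\<delta> = min (2 * ca / 9) (cb / 3)"
  have dpos: "\<delta> > 0" using a(3) b(3) by (simp add: \<delta>_def)
  have endsA: "\<Psi> ` Xs (N - 1) \<subseteq> sq_arc N s (N - 1) - ball (0, 1) \<delta>"
  proof
    fix z assume "z \<in> \<Psi> ` Xs (N - 1)"
    then obtain q where q: "q \<in> Xs (N - 1)" "z = \<Psi> q" by auto
    have qU: "q \<in> U" using U(2) q(1) by auto
    note iu = inU[OF qU]
    have ha: "ca \<le> cha q" "cha q \<le> 1" using a(2,4) q(1) by auto
    have hb: "0 \<le> chb q" "chb q \<le> 1" using b(2) by auto
    have "(1 - fst (\<Phi> q)) * (1 - cha q * (1/3)) \<le> 1 * (1 - ca * (1/3))"
      using iu ha by (intro mult_mono) auto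
    hence "y1 q \<ge> ca / 3" by (simp add: y1_def)
    moreover have "y1 q * (2/3) \<le> y1 q * (1 - chb q * (1/3))"
      using y1b[of q] iu hb by (intro mult_left_mono) auto
    ultimately have "y2 q \<ge> 2 * ca / 9" unfolding y2_def by linarith
    hence "y2 q \<ge> \<delta>" by (simp add: \<delta>_def)
    moreover have "0 \<le> y2 q" "y2 q \<le> 1" using y2b[of q] iu by auto
    ultimately show "z \<in> sq_arc N s (N - 1) - ball (0, 1) \<delta>"
      using q iu by (auto simp: topa topa' \<Psi>_def dist_Pair_Pair dist_real_def)
  qed
  have endsB: "\<Psi> ` Xs N \<subseteq> sq_arc N s (N - 1) - ball (1, 1) \<delta>"
  proof
    fix z assume "z \<in> \<Psi> ` Xs N"
    then obtain q where q: "q \<in> Xs N" "z = \<Psi> q" by auto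
    have qU: "q \<in> U" using U(2) q(1) by auto
    note iu = inU[OF qU]
    have hb: "cb \<le> chb q" "chb q \<le> 1" using b(2,4) q(1) by auto
    have y1: "0 \<le> y1 q" "y1 q \<le> 1" using y1b[of q] iu by auto
    have "y1 q * (1 - chb q * (1/3)) \<le> 1 * (1 - cb * (1/3))"
      using y1 hb by (intro mult_mono) auto
    hence "1 - y2 q \<ge> cb / 3" by (simp add: y2_def)
    hence "1 - y2 q \<ge> \<delta>" by (simp add: \<delta>_def)
    moreover have "0 \<le> y2 q" "y2 q \<le> 1" using y2b[of q] iu by auto
    ultimately show "z \<in> sq_arc N s (N - 1) - ball (1, 1) \<delta>"
      using q iu by (auto simp: topa topa' \<Psi>_def dist_Pair_Pair dist_real_def)
  qed
  have brk: "poisson_bracket A W (\<lambda>x. fst (\<Psi> x)) (\<lambda>x. snd (\<Psi> x)) p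
             = poisson_bracket A W (\<lambda>x. fst (\<Phi> x)) (\<lambda>x. snd (\<Phi> x)) p" if p: "p \<in> topspace X" for p
  proof -
    define c where "c = (SOME c. c \<in> A \<and> p \<in> fst c)"
    have "\<exists>c. c \<in> A \<and> p \<in> fst c" using p cov by auto
    hence c: "c \<in> A" "p \<in> fst c" unfolding c_def by (metis (mono_tags, lifting) someI_ex)+
    define \<psi> where "\<psi> = inv_into (fst c) (snd c)"
    define y where "y = snd c p"
    have e2: "(\<lambda>x. snd (\<Psi> x)) = (\<lambda>x. snd (\<Phi> x))" by (simp add: \<Psi>_def)
    have "grad_coord ((\<lambda>x. fst (\<Psi> x)) \<circ> \<psi>) y = grad_coord ((\<lambda>x. fst (\<Phi> x)) \<circ> \<psi>) y
          \<or> grad_coord ((\<lambda>x. snd (\<Phi> x)) \<circ> \<psi>) y = 0"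
    proof (cases "p \<in> U")
      case True
      let ?T = "snd c ` (fst c \<inter> U)"
      have To: "open ?T" using chart_open_image[OF atl c(1) U(1)] .
      have yT: "y \<in> ?T" using c True y_def by auto
      have eq: "\<forall>z\<in>?T. ((\<lambda>x. snd (\<Phi> x)) \<circ> \<psi>) z = (\<lambda>z. 1) z"
      proof
        fix z assume "z \<in> ?T"
        then obtain w where w: "w \<in> fst c" "w \<in> U" "z = snd c w" by auto
        have "\<psi> z = w" using chart_inv[OF atl c(1) w(1)] w(3) by (simp add: \<psi>_def)
        thus "((\<lambda>x. snd (\<Phi> x)) \<circ> \<psi>) z = (\<lambda>z. 1) z" using inU[OF w(2)] by simp
      qed
      have "pderiv_coord i ((\<lambda>x. snd (\<Phi> x)) \<circ> \<psi>) y = 0" for i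
        using pd_cong[OF To yT eq, of i] by (simp add: pderiv_coord_def o_def)
      then show ?thesis by (simp add: grad_coord_def vec_eq_iff)
    next
      case False
      let ?O = "topspace X - (Ca \<union> Cb)"
      have Oo: "openin X ?O" using a(5) b(5) by blast
      let ?T = "snd c ` (fst c \<inter> ?O)"
      have To: "open ?T" using chart_open_image[OF atl c(1) Oo] .
      have "p \<notin> Ca" "p \<notin> Cb" using a(6) b(6) False by auto
      hence yT: "y \<in> ?T" using c p y_def by auto
      have eq: "\<forall>z\<in>?T. ((\<lambda>x. fst (\<Psi> x)) \<circ> \<psi>) z = ((\<lambda>x. fst (\<Phi> x)) \<circ> \<psi>) z"
      proof
        fix z assume "z \<in> ?T"
        then obtain w where w: "w \<in> fst c" "w \<in> ?O" "z = snd c w" by auto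
        have "\<psi> z = w" using chart_inv[OF atl c(1) w(1)] w(3) by (simp add: \<psi>_def)
        moreover have "cha w = 0" "chb w = 0" using w(2) a(7) b(7) by auto
        ultimately show "((\<lambda>x. fst (\<Psi> x)) \<circ> \<psi>) z = ((\<lambda>x. fst (\<Phi> x)) \<circ> \<psi>) z"
          by (simp add: \<Psi>_def y2_def y1_def)
      qed
      show ?thesis using pd_cong[OF To yT eq] by (simp add: grad_coord_def o_def)
    qed
    then show ?thesis
      unfolding poisson_bracket_def Let_def c_def[symmetric] \<psi>_def[symmetric] y_def[symmetric] e2
      by auto
  qed
  have "sup_norm X (poisson_bracket A W (\<lambda>x. fst (\<Psi> x)) (\<lambda>x. snd (\<Psi> x)))
        = sup_norm X (poisson_bracket A W (\<lambda>x. fst (\<Phi> x)) (\<lambda>x. snd (\<Phi> x)))"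
    unfolding sup_norm_def using brk by (intro SUP_cong) auto
  hence norm: "sup_norm X (poisson_bracket A W (\<lambda>x. fst (\<Psi> x)) (\<lambda>x. snd (\<Psi> x)))
        \<le> sup_norm X (poisson_bracket A W (\<lambda>x. fst (\<Phi> x)) (\<lambda>x. snd (\<Phi> x))) + ennreal \<epsilon>"
    by simp
  show "\<exists>\<Phi>'. smooth_on_mfd A (\<lambda>x. fst (\<Phi>' x)) \<and> smooth_on_mfd A (\<lambda>x. snd (\<Phi>' x)) \<and>
            \<Phi>' ` topspace X \<subseteq> unit_square \<and>
            (\<forall>k\<in>{1..N-2}. \<Phi>' ` Xs k \<subseteq> sq_arc N s k) \<and>
            (\<exists>\<delta>>0. \<Phi>' ` Xs (N - 1) \<subseteq> sq_arc N s (N - 1) - ball (0, 1) \<delta> \<and>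
                    \<Phi>' ` Xs N \<subseteq> sq_arc N s (N - 1) - ball (1, 1) \<delta>) \<and>
            sup_norm X (poisson_bracket A W (\<lambda>x. fst (\<Phi>' x)) (\<lambda>x. snd (\<Phi>' x)))
              \<le> sup_norm X (poisson_bracket A W (\<lambda>x. fst (\<Phi> x)) (\<lambda>x. snd (\<Phi> x))) + ennreal \<epsilon>"
    using sm1 sm2 sq arcs dpos endsA endsB norm by blast
qed

end
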